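(* In the Cucker–Smale setting below, for all $n\in\mathbb{N}_0$, $$d_V(t_{2n+1})\le\left(1-\int_{t_{2n}}^{t_{2n+1}}\phi(s)\,ds\right)d_V(t_{2n}),$$ where for $t\ge0$, $\tilde\psi_t:=\min\{\tilde\psi(r):r\in[0,\max_{s\in[0,t]}d_X(s)]\}$ and $\phi(t):=\min\left\{e^{-\tilde KT}\tilde\psi_t,\frac{e^{-\tilde KT}}{T}\right\}$.
   Context: Setting: $N\ge2$; $\tilde\psi:\mathbb{R}\to\mathbb{R}$ positive, bounded, continuous, with $\tilde K:=\|\tilde\psi\|_\infty$ and $\int_0^\infty\min_{r\in[0,x]}\tilde\psi(r)dx=+\infty$; $\{t_n\}_{n\in\mathbb{N}_0}$ increasing, nonnegative, $t_0=0$, $t_n\to\infty$, with $t_{2n+2}-t_{2n+1}<\frac{\ln2}{\tilde K}$ and $t_{2n+1}-t_{2n}>\frac1{\tilde K}$ for all $n$, and $\sum_{p\ge0}\ln\frac{e^{\tilde K(t_{2p+2}-t_{2p+1})}}{2-e^{\tilde K(t_{2p+2}-t_{2p+1})}}<\infty$. A number $T>\frac{\ln2}{\tilde K}$ is fixed such that $t_{2n+1}-t_{2n}\le T$ for all $n\in\mathbb{N}_0$. $\alpha(0)=1$, $\alpha=1$ on $(t_{2n},t_{2n+1})$, $\alpha=-1$ on $[t_{2n+1},t_{2n+2}]$. $\{(x_i,v_i)\}$ solves $x_i'=v_i$, $v_i'(t)=\frac1{N-1}\sum_{j\ne i}\alpha(t)\tilde\psi(|x_i(t)-x_j(t)|)(v_j(t)-v_i(t))$,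 $t>0$, with given initial data in $\mathbb{R}^d$ (continuous, $C^1$ on each $(t_n,t_{n+1})$). $d_X(t):=\max_{i,j}|x_i(t)-x_j(t)|$, $d_V(t):=\max_{i,j}|v_i(t)-v_j(t)|$. *)

theory Defs
  imports "HOL-Analysis.Analysis"
begin

definition cs_alpha :: "(nat \<Rightarrow> real) \<Rightarrow> real \<Rightarrow> real" where
  "cs_alpha tt s =
     (if s = 0 then 1
      else if (\<exists>n. tt (2*n) < s \<and> s < tt (2*n+1)) then 1
      else if (\<exists>n. tt (2*n+1) \<le> s \<and> s \<le> tt (2*n+2)) then -1
      else 0)"

definition diam_at :: "nat \<Rightarrow> (nat \<Rightarrow> real \<Rightarrow> 'a::real_normed_vector) \<Rightarrow> real \<Rightarrow> real" where
  "diam_at N y s = Max {norm (y i s - y j s) | i j. i < N \<and> j < N}"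

definition psi_t :: "(real \<Rightarrow> real) \<Rightarrow> nat \<Rightarrow> (nat \<Rightarrow> real \<Rightarrow> 'a::real_normed_vector) \<Rightarrow> real \<Rightarrow> real" where
  "psi_t \<psi> N x s = Inf (\<psi> ` {0 .. Sup ((\<lambda>r. diam_at N x r) ` {0..s})})"

definition phi_fun :: "(real \<Rightarrow> real) \<Rightarrow> real \<Rightarrow> real \<Rightarrow> nat \<Rightarrow> (nat \<Rightarrow> real \<Rightarrow> 'a::real_normed_vector) \<Rightarrow> real \<Rightarrow> real" where
  "phi_fun \<psi> K T N x s = min (exp (- K * T) * psi_t \<psi> N x s) (exp (- K * T) / T)"

end

theory Submission
  imports Defs
begin

lemma exp_chord:
  fixes a c :: real
  assumes "0 \<le> a" "a \<le> c"
  shows "exp (- a) \<le> 1 - exp (- c) * a"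
proof (cases "c = 0")
  case True then show ?thesis using assms by simp
next
  case False
  then have c: "c > 0" using assms by simp
  define l where "l = a / c"
  have l: "0 \<le> l" "l \<le> 1" using assms c by (auto simp: l_def field_simps)
  have "exp ((1 - l) * 0 + l * (- c)) \<le> (1 - l) * exp 0 + l * exp (- c)"
    using convex_onD[OF exp_convex, of l 0 "-c"] l by simp
  moreover have "(1 - l) * 0 + l * (- c) = - a" using c by (simp add: l_def)
  ultimately have 1: "exp (- a) \<le> 1 - l * (1 - exp (- c))" by (simp add: algebra_simps)
  have "1 + c \<le> exp c" by (rule exp_ge_add_one_self)
  then have "c * exp (- c) \<le> 1 - exp (- c)"
    by (simp add: exp_minus field_simps)
  then have "l * (c * exp (- c)) \<le> l * (1 - exp (-c))"
    using l by (intro mult_left_mono) auto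
  moreover have "l * c = a" using c by (simp add: l_def)
  ultimately have "a * exp (- c) \<le> l * (1 - exp (-c))"
    by (metis mult.assoc)
  with 1 show ?thesis by (simp add: algebra_simps)
qed

lemma dini_mono0:
  fixes F :: "real \<Rightarrow> real"
  assumes ab: "a \<le> b" and cont: "continuous_on {a..b} F"
    and D: "\<And>t e. t \<in> {a..<b} \<Longrightarrow> e > 0 \<Longrightarrow> eventually (\<lambda>h. F (t + h) \<le> F t + e * h) (at_right 0)"
  shows "F b \<le> F a"
proof -
  have "F b \<le> F a + e * (b - a)" if e: "e > 0" for e
  proof -
    define S where "S = {a..b} \<inter> (\<lambda>t. F t - e * t) -` {..F a - e * a}"
    have cl: "closed S" unfolding S_def
      by (rule continuous_closed_preimage) (auto intro!: continuous_intros cont)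
    have aS: "a \<in> S" using ab by (simp add: S_def)
    have bdd: "bdd_above S" by (rule bdd_aboveI[of _ b]) (auto simp: S_def)
    define s where "s = Sup S"
    have sS: "s \<in> S" unfolding s_def using closed_contains_Sup[OF _ bdd cl] aS by blast
    have "s = b"
    proof (rule ccontr)
      assume "s \<noteq> b"
      with sS have sb: "s < b" "a \<le> s" by (auto simp: S_def)
      obtain d where d: "d > 0" and dd: "\<And>h. 0 < h \<and> h < d \<longrightarrow> F (s + h) \<le> F s + e * h"
        using D[of s e] sb e unfolding eventually_at_right_field by auto
      define h where "h = min (d/2) (b - s)"
      have h: "0 < h" "h < d" "s + h \<le> b" using d sb by (auto simp: h_def)
      have "F (s + h) \<le> F s + e * h" using dd h by auto
      also have "F s \<le> F a - e * a + e * s" using sS by (auto simp: S_def)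
      finally have "s + h \<in> S" using h sb by (auto simp: S_def algebra_simps)
      then have "s + h \<le> s" unfolding s_def by (rule cSup_upper[OF _ bdd])
      with h show False by simp
    qed
    with sS show ?thesis by (auto simp: S_def algebra_simps)
  qed
  note * = this
  have "F b \<le> F a + e" if e: "e > 0" for e
  proof -
    have "F b \<le> F a + (e / (b - a + 1)) * (b - a)" using * [of "e / (b - a + 1)"] e ab by simp
    also have "(e / (b - a + 1)) * (b - a) \<le> e" using e ab by (simp add: field_simps)
    finally show ?thesis by simp
  qed
  then show ?thesis by (rule field_le_epsilon)
qed

lemma dini_mono:
  fixes F :: "real \<Rightarrow> real"
  assumes ab: "a < b" and cont: "continuous_on {a..b} F"
    and D: "\<And>t e. t \<in> {a<..<b} \<Longrightarrow> e > 0 \<Longrightarrow> eventually (\<lambda>h. F (t + h) \<le> F t + e * h) (at_right 0)"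
  shows "F b \<le> F a"
proof -
  have *: "F b \<le> F a'" if "a < a'" "a' < b" for a'
    by (rule dini_mono0) (use that in \<open>auto intro: D continuous_on_subset[OF cont]\<close>)
  have "(F \<longlongrightarrow> F a) (at a within {a..b})"
    using cont ab by (simp add: continuous_on_def)
  then have "(F \<longlongrightarrow> F a) (at_right a)"
    using at_within_Icc_at_right[OF ab] by simp
  moreover have "eventually (\<lambda>y. F b \<le> F y) (at_right a)"
    unfolding eventually_at_right_field using ab * by blast
  ultimately show ?thesis
    by (rule tendsto_lowerbound) simp
qed

lemma max_cont:
  fixes f :: "'p \<Rightarrow> 'b::topological_space \<Rightarrow> real"
  assumes "finite P" "P \<noteq> {}" "\<And>p. p \<in> P \<Longrightarrow> continuous_on S (f p)"
  shows "continuous_on S (\<lambda>s. Max ((\<lambda>p. f p s) ` P))"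
  using assms
proof (induction P rule: finite_ne_induct)
  case (singleton x)
  then show ?case by simp
next
  case (insert x F)
  have "(\<lambda>s. Max ((\<lambda>p. f p s) ` insert x F)) = (\<lambda>s. max (f x s) (Max ((\<lambda>p. f p s) ` F)))"
    using insert by (auto simp: Max_insert)
  then show ?case using insert by (auto intro!: continuous_on_max)
qed

lemma diam_eq:
  "diam_at N y s = Max ((\<lambda>p. norm (y (fst p) s - y (snd p) s)) ` ({..<N} \<times> {..<N}))"
  unfolding diam_at_def by (rule arg_cong[where f=Max]) force

lemma diam_cont:
  assumes "N > 0" "\<And>i. i < N \<Longrightarrow> continuous_on S (y i)"
  shows "continuous_on S (diam_at N y)"
  unfolding diam_eq
  by (rule max_cont) (use assms in \<open>auto intro!: continuous_intros\<close>)

lemma diam_ge: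
  assumes "i < N" "j < N"
  shows "norm (y i s - y j s) \<le> diam_at N y s"
  unfolding diam_eq by (rule Max_ge) (use assms in force)+

lemma diam_attained:
  assumes "N > 0"
  shows "\<exists>i<N. \<exists>j<N. diam_at N y s = norm (y i s - y j s)"
proof -
  have "diam_at N y s \<in> (\<lambda>p. norm (y (fst p) s - y (snd p) s)) ` ({..<N} \<times> {..<N})"
    unfolding diam_eq by (rule Max_in) (use assms in auto)
  then show ?thesis by force
qed

lemma diam_nonneg:
  assumes "N > 0"
  shows "0 \<le> diam_at N y s"
  using diam_ge[of 0 N 0 y s] assms by simp


lemma key_est:
  fixes w :: "nat \<Rightarrow> 'a::real_inner" and c :: "nat \<Rightarrow> nat \<Rightarrow> real"
  assumes N: "N \<ge> 2" and ik: "i < N" "k < N"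
    and Dmax: "\<And>j l. j < N \<Longrightarrow> l < N \<Longrightarrow> norm (w j - w l) \<le> D"
    and Dik: "norm (w i - w k) = D"
    and g: "0 \<le> g" and ci: "\<And>j. j < N \<Longrightarrow> g \<le> c i j" and ck: "\<And>j. j < N \<Longrightarrow> g \<le> c k j"
  defines "A \<equiv> \<lambda>m. (1 / (real N - 1)) *\<^sub>R (\<Sum>j\<in>{0..<N} - {m}. c m j *\<^sub>R (w j - w m))"
  shows "inner (w i - w k) (A i - A k) \<le> - g * D^2"
proof -
  define z where "z = w i - w k"
  define p where "p = (\<lambda>j. inner z (w j))"
  have "p i - p k = inner z (w i - w k)" by (simp add: p_def inner_diff_right)
  also have "\<dots> = (norm z)^2" by (simp add: z_def power2_norm_eq_inner)
  finally have pik: "p i - p k = D^2" using Dik by (simp add: z_def)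
  have D0: "0 \<le> D" using Dik by auto
  have le1: "p j - p i \<le> 0" if "j < N" for j
  proof -
    have "p j - p k = inner z (w j - w k)" by (simp add: p_def inner_diff_right)
    also have "\<dots> \<le> norm z * norm (w j - w k)" by (rule norm_cauchy_schwarz)
    also have "\<dots> \<le> D * D" using Dmax[OF that ik(2)] Dik D0 by (simp add: z_def mult_left_mono)
    finally show ?thesis using pik by (simp add: power2_eq_square)
  qed
  have ge1: "p j - p k \<ge> 0" if "j < N" for j
  proof -
    have "p i - p j = inner z (w i - w j)" by (simp add: p_def inner_diff_right)
    also have "\<dots> \<le> norm z * norm (w i - w j)" by (rule norm_cauchy_schwarz)
    also have "\<dots> \<le> D * D" using Dmax[OF ik(1) that] Dik D0 by (simp add: z_def mult_left_mono)
    finally show ?thesis using pik by (simp add: power2_eq_square)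
  qed
  have Ai: "inner z (A i) = (1 / (real N - 1)) * (\<Sum>j\<in>{0..<N} - {i}. c i j * (p j - p i))"
    by (simp add: A_def inner_sum_right p_def inner_diff_right)
  have Ak: "inner z (A k) = (1 / (real N - 1)) * (\<Sum>j\<in>{0..<N} - {k}. c k j * (p j - p k))"
    by (simp add: A_def inner_sum_right p_def inner_diff_right)
  have si: "(\<Sum>j\<in>{0..<N} - {i}. c i j * (p j - p i)) \<le> (\<Sum>j\<in>{0..<N} - {i}. g * (p j - p i))"
    by (rule sum_mono) (auto intro!: mult_right_mono_neg le1 ci)
  have sk: "(\<Sum>j\<in>{0..<N} - {k}. g * (p j - p k)) \<le> (\<Sum>j\<in>{0..<N} - {k}. c k j * (p j - p k))"
    by (rule sum_mono) (auto intro!: mult_right_mono ge1 ck)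
  have ei: "(\<Sum>j\<in>{0..<N} - {i}. g * (p j - p i)) = (\<Sum>j\<in>{0..<N}. g * (p j - p i))"
    using ik by (subst sum_diff1) auto
  have ek: "(\<Sum>j\<in>{0..<N} - {k}. g * (p j - p k)) = (\<Sum>j\<in>{0..<N}. g * (p j - p k))"
    using ik by (subst sum_diff1) auto
  have diff: "(\<Sum>j\<in>{0..<N}. g * (p j - p i)) - (\<Sum>j\<in>{0..<N}. g * (p j - p k)) = - real N * g * D^2"
  proof -
    have "(\<Sum>j\<in>{0..<N}. g * (p j - p i)) - (\<Sum>j\<in>{0..<N}. g * (p j - p k))
        = (\<Sum>j\<in>{0..<N}. g * (p j - p i) - g * (p j - p k))" by (simp add: sum_subtractf)
    also have "\<dots> = (\<Sum>j\<in>{0..<N}. - g * D^2)"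
      by (rule sum.cong) (auto simp: algebra_simps pik[symmetric])
    finally show ?thesis by simp
  qed
  have Npos: "real N - 1 > 0" using N by simp
  have "inner z (A i - A k) = inner z (A i) - inner z (A k)" by (simp add: inner_diff_right)
  also have "\<dots> = (1 / (real N - 1)) * ((\<Sum>j\<in>{0..<N} - {i}. c i j * (p j - p i)) - (\<Sum>j\<in>{0..<N} - {k}. c k j * (p j - p k)))"
    unfolding Ai Ak by (simp only: right_diff_distrib)
  also have "\<dots> \<le> (1 / (real N - 1)) * ((\<Sum>j\<in>{0..<N}. g * (p j - p i)) - (\<Sum>j\<in>{0..<N}. g * (p j - p k)))"
  proof (rule mult_left_mono)
    show "(\<Sum>j\<in>{0..<N} - {i}. c i j * (p j - p i)) - (\<Sum>j\<in>{0..<N} - {k}. c k j * (p j - p k))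
      \<le> (\<Sum>j\<in>{0..<N}. g * (p j - p i)) - (\<Sum>j\<in>{0..<N}. g * (p j - p k))"
      using si sk ei ek by linarith
  qed (use Npos in simp)
  also have "\<dots> = - (real N / (real N - 1)) * g * D^2" using diff by simp
  also have "\<dots> \<le> - g * D^2"
  proof -
    have "1 \<le> real N / (real N - 1)" using Npos by simp
    then have "1 * (g * D^2) \<le> real N / (real N - 1) * (g * D^2)"
      by (rule mult_right_mono) (use g in simp)
    then show ?thesis by simp
  qed
  finally show ?thesis by (simp add: z_def)
qed


lemma one_minus_exp: "(1 - x) * exp x \<le> (1::real)"
proof -
  have "1 - x \<le> exp (- x)" using exp_ge_add_one_self[of "-x"] by simp
  then have "(1 - x) * exp x \<le> exp (- x) * exp x" by (rule mult_right_mono) simp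
  then show ?thesis by (simp add: exp_minus)
qed

lemma dini_step:
  fixes q :: "'p \<Rightarrow> real \<Rightarrow> real" and q' :: "'p \<Rightarrow> real" and D2 G :: "real \<Rightarrow> real"
  assumes P: "finite P"
    and qd: "\<And>p. p \<in> P \<Longrightarrow> (q p has_real_derivative q' p) (at t)"
    and Dq: "\<And>s. \<exists>p\<in>P. D2 s \<le> q p s"
    and qD: "\<And>p. p \<in> P \<Longrightarrow> q p t \<le> D2 t"
    and qmax: "\<And>p. p \<in> P \<Longrightarrow> q p t = D2 t \<Longrightarrow> q' p \<le> - 2 * \<gamma> * D2 t"
    and \<gamma>: "\<gamma> \<ge> 0"
    and Gb: "eventually (\<lambda>h. G (t + h) \<le> G t + h * \<gamma>) (at_right 0)"
    and D0: "\<And>s. 0 \<le> D2 s"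
    and e: "e > 0"
  shows "eventually (\<lambda>h. D2 (t + h) * exp (2 * G (t + h)) \<le> D2 t * exp (2 * G t) + e * h) (at_right 0)"
proof -
  define E where "E = exp (2 * G t)"
  have E: "E > 0" by (simp add: E_def)
  define e1 where "e1 = e / (2 * E)"
  have e1: "e1 > 0" using e E by (simp add: e1_def)
  have ev_pos: "eventually (\<lambda>h::real. 0 < h) (at_right 0)" by (rule eventually_at_right_less)
  have evp: "eventually (\<lambda>h. q p (t + h) \<le> D2 t * (1 - 2 * h * \<gamma>) + e1 * h) (at_right 0)"
    if p: "p \<in> P" for p
  proof -
    have "((\<lambda>h. (q p (t + h) - q p t) / h) \<longlongrightarrow> q' p) (at 0)"
      using qd[OF p] by (simp add: DERIV_def)
    then have "((\<lambda>h. (q p (t + h) - q p t) / h) \<longlongrightarrow> q' p) (at_right 0)"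
      by (rule filterlim_mono) (simp_all add: at_le)
    then have ev1: "eventually (\<lambda>h. (q p (t + h) - q p t) / h < q' p + e1) (at_right 0)"
      by (rule order_tendstoD(2)) (use e1 in simp)
    have ev2: "eventually (\<lambda>h. q p (t + h) \<le> q p t + h * q' p + e1 * h) (at_right 0)"
      using ev1 ev_pos
    proof eventually_elim
      case (elim h)
      then have "q p (t + h) - q p t < (q' p + e1) * h" by (simp add: divide_less_eq)
      then show ?case by (simp add: algebra_simps)
    qed
    show ?thesis
    proof (cases "q p t = D2 t")
      case True
      have mono: "q' p * h \<le> (- 2 * \<gamma> * D2 t) * h" if "h > 0" for h
        using qmax[OF p True] that by (intro mult_right_mono) auto
      from ev2 ev_pos show ?thesis
      proof eventually_elim
        case (elim h)
        then show ?case using mono[of h] True by (simp add: algebra_simps)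
      qed
    next
      case False
      with qD[OF p] have lt: "q p t < D2 t" by simp
      define r where "r = (D2 t - q p t) / (\<bar>q' p\<bar> + 2 * \<gamma> * D2 t + 1)"
      have den: "\<bar>q' p\<bar> + 2 * \<gamma> * D2 t + 1 > 0" using \<gamma> D0[of t] by (simp add: add_nonneg_pos)
      have r: "r > 0" using lt den by (simp add: r_def)
      have ev3: "eventually (\<lambda>h::real. h < r) (at_right 0)"
        using r unfolding eventually_at_right_field by auto
      show ?thesis using ev2 ev3 ev_pos
      proof eventually_elim
        case (elim h)
        have "h * (\<bar>q' p\<bar> + 2 * \<gamma> * D2 t + 1) \<le> D2 t - q p t"
          using elim den by (simp add: r_def less_divide_eq algebra_simps)
        moreover have "h * (q' p + 2 * \<gamma> * D2 t) \<le> h * (\<bar>q' p\<bar> + 2 * \<gamma> * D2 t + 1)"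
          using elim by (intro mult_left_mono) auto
        ultimately show ?case using elim by (simp add: algebra_simps)
      qed
    qed
  qed
  have evP: "eventually (\<lambda>h. \<forall>p\<in>P. q p (t + h) \<le> D2 t * (1 - 2 * h * \<gamma>) + e1 * h) (at_right 0)"
    by (rule eventually_ball_finite[OF P]) (use evp in blast)
  have "((\<lambda>h. exp (2 * h * \<gamma>)) \<longlongrightarrow> exp (2 * 0 * \<gamma>)) (at_right (0::real))"
    by (intro tendsto_intros)
  then have evexp: "eventually (\<lambda>h. exp (2 * h * \<gamma>) < 2) (at_right 0)"
    by (rule order_tendstoD(2)) simp
  show ?thesis using evP evexp Gb ev_pos
  proof eventually_elim
    case (elim h)
    define B where "B = D2 t * (1 - 2 * h * \<gamma>) + e1 * h"
    obtain p where p: "p \<in> P" "D2 (t + h) \<le> q p (t + h)" using Dq by blast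
    have DB: "D2 (t + h) \<le> B" using p elim unfolding B_def by force
    have B0: "0 \<le> B" using DB D0[of "t + h"] by simp
    have "D2 (t + h) * exp (2 * G (t + h)) \<le> B * exp (2 * G (t + h))"
      using DB by (intro mult_right_mono) auto
    also have "\<dots> \<le> B * exp (2 * G t + 2 * h * \<gamma>)"
      using elim B0 by (intro mult_left_mono) auto
    also have "\<dots> = E * (D2 t * ((1 - 2 * h * \<gamma>) * exp (2 * h * \<gamma>))) + E * e1 * h * exp (2 * h * \<gamma>)"
      by (simp add: B_def E_def exp_add algebra_simps)
    also have "\<dots> \<le> E * (D2 t * 1) + E * e1 * h * 2"
    proof (rule add_mono)
      show "E * (D2 t * ((1 - 2 * h * \<gamma>) * exp (2 * h * \<gamma>))) \<le> E * (D2 t * 1)"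
        using E D0[of t] one_minus_exp[of "2 * h * \<gamma>"] by (intro mult_left_mono) auto
      show "E * e1 * h * exp (2 * h * \<gamma>) \<le> E * e1 * h * 2"
        using E e1 elim by (intro mult_left_mono) auto
    qed
    also have "\<dots> = D2 t * exp (2 * G t) + e * h"
      using E by (simp add: E_def e1_def)
    finally show ?case .
  qed
qed


lemma inner_sq_deriv:
  fixes z :: "real \<Rightarrow> 'a::real_inner"
  assumes "(z has_vector_derivative z') (at t)"
  shows "((\<lambda>s. inner (z s) (z s)) has_real_derivative (2 * inner (z t) z')) (at t)"
proof -
  have d: "(z has_derivative (\<lambda>h. h *\<^sub>R z')) (at t)"
    using assms by (simp add: has_vector_derivative_def)
  have "((\<lambda>s. inner (z s) (z s)) has_derivative (\<lambda>h. inner (z t) (h *\<^sub>R z') + inner (h *\<^sub>R z') (z t))) (at t)"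
    by (rule has_derivative_inner[OF d d])
  moreover have "(\<lambda>h. inner (z t) (h *\<^sub>R z') + inner (h *\<^sub>R z') (z t)) = (\<lambda>h. (2 * inner (z t) z') * h)"
    by (rule ext) (simp add: inner_commute algebra_simps)
  ultimately show ?thesis by (simp add: has_field_derivative_def)
qed

lemma R_bdd:
  fixes x :: "nat \<Rightarrow> real \<Rightarrow> 'a::real_normed_vector"
  assumes N: "N > 0" and xc: "\<And>i. i < N \<Longrightarrow> continuous_on {0..} (x i)"
  shows "bdd_above ((\<lambda>r. diam_at N x r) ` {0..s})"
proof -
  have "continuous_on {0..s} (diam_at N x)"
    by (rule diam_cont[OF N]) (auto intro: continuous_on_subset[OF xc])
  then have "compact ((\<lambda>r. diam_at N x r) ` {0..s})"
    by (rule compact_continuous_image) simp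
  then show ?thesis by (intro bounded_imp_bdd_above compact_imp_bounded)
qed

lemma psi_t_facts:
  fixes x :: "nat \<Rightarrow> real \<Rightarrow> 'a::real_normed_vector"
  assumes N: "N > 0" and xc0: "\<forall>i<N. continuous_on {0..} (x i)"
    and pos0: "\<forall>r. \<psi> r > 0" and s: "0 \<le> s"
  shows "\<And>i j. i < N \<Longrightarrow> j < N \<Longrightarrow> psi_t \<psi> N x s \<le> \<psi> (norm (x i s - x j s))"
    and "0 \<le> psi_t \<psi> N x s"
    and "psi_t \<psi> N x s \<le> \<psi> 0"
    and "\<And>s'. s \<le> s' \<Longrightarrow> psi_t \<psi> N x s' \<le> psi_t \<psi> N x s"
proof -
  have xc: "\<And>i. i < N \<Longrightarrow> continuous_on {0..} (x i)" using xc0 by blast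
  have pos: "\<And>r. \<psi> r > 0" using pos0 by blast
  define R where "R = (\<lambda>s. Sup ((\<lambda>r. diam_at N x r) ` {0..s}))"
  have Rge: "diam_at N x r \<le> R s'" if "0 \<le> r" "r \<le> s'" for r s'
    unfolding R_def by (rule cSup_upper) (use that R_bdd[OF N xc] in auto)
  have R0: "0 \<le> R s" using Rge[of 0 s] diam_nonneg[OF N] s by (meson order_trans order_refl)
  have bb: "bdd_below (\<psi> ` A)" for A using pos by (meson bdd_belowI2 less_le_not_le)
  have pt: "psi_t \<psi> N x s = Inf (\<psi> ` {0..R s})" by (simp add: psi_t_def R_def)
  show "psi_t \<psi> N x s \<le> \<psi> (norm (x i s - x j s))" if "i < N" "j < N" for i j
  proof -
    have "norm (x i s - x j s) \<le> R s" using diam_ge[OF that] Rge[of s s] s by (meson order_trans order_refl)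
    then show ?thesis unfolding pt by (intro cInf_lower bb) auto
  qed
  show "0 \<le> psi_t \<psi> N x s" unfolding pt
    by (rule cInf_greatest) (use R0 pos in \<open>auto intro: less_imp_le\<close>)
  show "psi_t \<psi> N x s \<le> \<psi> 0" unfolding pt
    by (intro cInf_lower bb) (use R0 in auto)
  show "psi_t \<psi> N x s' \<le> psi_t \<psi> N x s" if "s \<le> s'" for s'
  proof -
    have "R s \<le> R s'" unfolding R_def
      by (rule cSup_subset_mono) (use that s R_bdd[OF N xc] in auto)
    then have "Inf (\<psi> ` {0..R s'}) \<le> Inf (\<psi> ` {0..R s})"
      by (intro cInf_superset_mono bb) (use R0 in auto)
    then show ?thesis by (simp add: psi_t_def R_def)
  qed
qed


theorem proposition7p13:
  fixes N :: nat and \<psi> :: "real \<Rightarrow> real" and K T :: real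
    and tt :: "nat \<Rightarrow> real"
    and x v :: "nat \<Rightarrow> real \<Rightarrow> 'a::euclidean_space"
  assumes N: "N \<ge> 2"
    and psi_pos: "\<And>r. \<psi> r > 0"
    and psi_bdd: "bounded (range \<psi>)"
    and psi_cont: "continuous_on UNIV \<psi>"
    and K_def: "K = (SUP r. \<bar>\<psi> r\<bar>)"
    and psi_div: "filterlim (\<lambda>y. integral {0..y} (\<lambda>z. Inf (\<psi> ` {0..z}))) at_top at_top"
    and t_mono: "strict_mono tt" and t0: "tt 0 = 0"
    and t_lim: "filterlim tt at_top sequentially"
    and gap_neg: "\<And>n. tt (2*n+2) - tt (2*n+1) < ln 2 / K"
    and gap_pos: "\<And>n. tt (2*n+1) - tt (2*n) > 1 / K"
    and sum_fin: "summable (\<lambda>p. ln (exp (K * (tt (2*p+2) - tt (2*p+1)))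
                                    / (2 - exp (K * (tt (2*p+2) - tt (2*p+1))))))"
    and T_gt: "T > ln 2 / K"
    and T_bd: "\<And>n. tt (2*n+1) - tt (2*n) \<le> T"
    and x_cont: "\<And>i. i < N \<Longrightarrow> continuous_on {0..} (x i)"
    and v_cont: "\<And>i. i < N \<Longrightarrow> continuous_on {0..} (v i)"
    and x_deriv: "\<And>i n s. i < N \<Longrightarrow> tt n < s \<Longrightarrow> s < tt (Suc n) \<Longrightarrow>
                    (x i has_vector_derivative v i s) (at s)"
    and v_deriv: "\<And>i n s. i < N \<Longrightarrow> tt n < s \<Longrightarrow> s < tt (Suc n) \<Longrightarrow>
                    (v i has_vector_derivative
                       ((1 / (real N - 1)) *\<^sub>R
                         (\<Sum>j\<in>{0..<N} - {i}.
                            (cs_alpha tt s * \<psi> (norm (x i s - x j s))) *\<^sub>R (v j s - v i s)))) (at s)"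
  shows "diam_at N v (tt (2*n+1))
           \<le> (1 - integral {tt (2*n)..tt (2*n+1)} (phi_fun \<psi> K T N x)) * diam_at N v (tt (2*n))"
proof -
  have N0: "N > 0" using N by simp
  have ttm: "tt m \<le> tt m'" if "m \<le> m'" for m m'
    using t_mono that by (simp add: strict_mono_less_eq)
  have ttn: "0 \<le> tt m" for m using ttm[of 0 m] t0 by simp
  define a where "a = tt (2*n)"
  define b where "b = tt (2*n+1)"
  have ab: "a < b" unfolding a_def b_def using t_mono by (simp add: strict_mono_less)
  have a0: "0 \<le> a" by (simp add: a_def ttn)
  define g where "g = psi_t \<psi> N x"
  have xc0: "\<forall>i<N. continuous_on {0..} (x i)" using x_cont by blast
  have pos0: "\<forall>r. \<psi> r > 0" using psi_pos by blast
  note pf = psi_t_facts[OF N0 xc0 pos0]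
  have bddK: "bdd_above (range (\<lambda>r. \<bar>\<psi> r\<bar>))"
  proof -
    obtain B where "\<And>y. y \<in> range \<psi> \<Longrightarrow> norm y \<le> B" using psi_bdd by (auto simp: bounded_iff)
    then show ?thesis by (intro bdd_aboveI[of _ B]) auto
  qed
  have psiK: "\<psi> r \<le> K" for r
  proof -
    have "\<bar>\<psi> r\<bar> \<le> K" unfolding K_def by (rule cSUP_upper[OF _ bddK]) simp
    then show ?thesis by simp
  qed
  have gK: "g s \<le> K" if "0 \<le> s" for s using pf(3)[OF that] psiK[of 0] by (simp add: g_def)
  have g0: "0 \<le> g s" if "0 \<le> s" for s using pf(2)[OF that] by (simp add: g_def)
  have ganti: "g s' \<le> g s" if "0 \<le> s" "s \<le> s'" for s s' using pf(4)[OF that] by (simp add: g_def)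
  have gint: "g integrable_on {a..b}"
  proof -
    have "mono_on {a..b} (\<lambda>s. - g s)"
      by (rule mono_onI) (use a0 ganti in auto)
    then have "(\<lambda>s. - g s) integrable_on {a..b}" by (rule integrable_on_mono_on)
    then have "(\<lambda>s. - (- g s)) integrable_on {a..b}" by (rule integrable_neg)
    then show ?thesis by simp
  qed
  define c where "c = exp (- K * T)"
  have c0: "0 < c" by (simp add: c_def)
  have phi_eq: "phi_fun \<psi> K T N x = (\<lambda>s. min (c * g s) (c / T))"
    by (rule ext) (simp add: phi_fun_def c_def g_def)
  have phiint: "(\<lambda>s. min (c * g s) (c / T)) integrable_on {a..b}"
  proof -
    have "mono_on {a..b} (\<lambda>s. - min (c * g s) (c / T))"
    proof (rule mono_onI)
      fix r s assume rs: "r \<in> {a..b}" "s \<in> {a..b}" "r \<le> s"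
      then have "c * g s \<le> c * g r" using a0 ganti c0 by (intro mult_left_mono) auto
      then show "- min (c * g r) (c / T) \<le> - min (c * g s) (c / T)" by linarith
    qed
    then have "(\<lambda>s. - min (c * g s) (c / T)) integrable_on {a..b}" by (rule integrable_on_mono_on)
    then have "(\<lambda>s. - (- min (c * g s) (c / T))) integrable_on {a..b}" by (rule integrable_neg)
    then show ?thesis by simp
  qed
  define G where "G = (\<lambda>s. integral {a..s} g)"
  define D2 where "D2 = (\<lambda>s. (diam_at N v s)^2)"
  define F where "F = (\<lambda>s. D2 s * exp (2 * G s))"
  have Fcont: "continuous_on {a..b} F"
  proof -
    have "continuous_on {a..b} (diam_at N v)"
      by (rule diam_cont[OF N0]) (use a0 in \<open>auto intro: continuous_on_subset[OF v_cont]\<close>)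
    moreover have "continuous_on {a..b} G"
      unfolding G_def by (rule indefinite_integral_continuous_1[OF gint])
    ultimately show ?thesis unfolding F_def D2_def by (intro continuous_intros)
  qed
  have FD: "eventually (\<lambda>h. F (t + h) \<le> F t + e * h) (at_right 0)"
    if t: "t \<in> {a<..<b}" and e: "e > 0" for t e
  proof -
    have t0': "0 \<le> t" using t a0 by simp
    have alpha: "cs_alpha tt t = 1"
    proof -
      have "t \<noteq> 0" using t a0 by auto
      moreover have "\<exists>m. tt (2*m) < t \<and> t < tt (2*m+1)" using t by (auto simp: a_def b_def)
      ultimately show ?thesis by (simp add: cs_alpha_def)
    qed
    define A where "A = (\<lambda>m. (1 / (real N - 1)) *\<^sub>R
                         (\<Sum>j\<in>{0..<N} - {m}.
                            (cs_alpha tt t * \<psi> (norm (x m t - x j t))) *\<^sub>R (v j t - v m t)))"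
    have vd: "(v m has_vector_derivative A m) (at t)" if "m < N" for m
      unfolding A_def using v_deriv[OF that, of "2*n" t] t by (simp add: a_def b_def)
    define P where "P = {..<N} \<times> {..<N}"
    define q where "q = (\<lambda>p s. inner (v (fst p) s - v (snd p) s) (v (fst p) s - v (snd p) s))"
    define q' where "q' = (\<lambda>p. 2 * inner (v (fst p) t - v (snd p) t) (A (fst p) - A (snd p)))"
    have Gb: "eventually (\<lambda>h. G (t + h) \<le> G t + h * g t) (at_right 0)"
    proof -
      have "eventually (\<lambda>h::real. h < b - t) (at_right 0)"
        using t unfolding eventually_at_right_field by (intro exI[of _ "b - t"]) auto
      then show ?thesis using eventually_at_right_less[of 0]
      proof eventually_elim
        case (elim h)
        have int2: "g integrable_on {a..t + h}"
          by (rule integrable_subinterval_real[OF gint]) (use elim t in auto)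
        have "G (t + h) = G t + integral {t..t+h} g"
          unfolding G_def using Henstock_Kurzweil_Integration.integral_combine[OF _ _ int2, of t] elim t by simp
        moreover have "integral {t..t+h} g \<le> integral {t..t+h} (\<lambda>_. g t)"
        proof (rule integral_le)
          show "g integrable_on {t..t + h}"
            by (rule integrable_subinterval_real[OF gint]) (use elim t in auto)
        qed (use t0' ganti in auto)
        moreover have "integral {t..t+h} (\<lambda>_. g t) = h * g t" using elim by simp
        ultimately show ?case using elim by (simp add: mult.commute)
      qed
    qed
    have main: "eventually (\<lambda>h. D2 (t + h) * exp (2 * G (t + h)) \<le> D2 t * exp (2 * G t) + e * h) (at_right 0)"
    proof (rule dini_step[where P=P and q=q and q'=q' and \<gamma>="g t"])
      show "finite P" by (simp add: P_def)
      show "(q p has_real_derivative q' p) (at t)" if "p \<in> P" for p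
      proof -
        have "((\<lambda>s. v (fst p) s - v (snd p) s) has_vector_derivative (A (fst p) - A (snd p))) (at t)"
          using that by (intro has_vector_derivative_diff vd) (auto simp: P_def)
        then show ?thesis unfolding q_def q'_def by (rule inner_sq_deriv)
      qed
      show "\<exists>p\<in>P. D2 s \<le> q p s" for s
      proof -
        obtain i j where ij: "i < N" "j < N" "diam_at N v s = norm (v i s - v j s)"
          using diam_attained[OF N0] by blast
        then show ?thesis
          by (intro bexI[of _ "(i, j)"]) (auto simp: P_def D2_def q_def power2_norm_eq_inner)
      qed
      show "q p t \<le> D2 t" if "p \<in> P" for p
      proof -
        have "norm (v (fst p) t - v (snd p) t) \<le> diam_at N v t"
          using that by (intro diam_ge) (auto simp: P_def)
        then have "(norm (v (fst p) t - v (snd p) t))^2 \<le> (diam_at N v t)^2"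
          by (intro power_mono) auto
        then show ?thesis by (simp add: q_def D2_def power2_norm_eq_inner)
      qed
      show "q' p \<le> - 2 * g t * D2 t" if p: "p \<in> P" and eq: "q p t = D2 t" for p
      proof -
        have ij: "fst p < N" "snd p < N" using p by (auto simp: P_def)
        have "(norm (v (fst p) t - v (snd p) t))^2 = (diam_at N v t)^2"
          using eq by (simp add: q_def D2_def power2_norm_eq_inner)
        then have nd: "norm (v (fst p) t - v (snd p) t) = diam_at N v t"
          using diam_nonneg[OF N0, of v t] power2_eq_iff_nonneg[of "norm (v (fst p) t - v (snd p) t)" "diam_at N v t"] by simp
        have "inner (v (fst p) t - v (snd p) t) (A (fst p) - A (snd p)) \<le> - g t * (diam_at N v t)^2"
          unfolding A_def
        proof (rule key_est[where w="\<lambda>j. v j t" and c="\<lambda>m j. cs_alpha tt t * \<psi> (norm (x m t - x j t))"])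
          show "2 \<le> N" by (rule N)
          show "fst p < N" "snd p < N" by (rule ij)+
          show "norm (v j t - v l t) \<le> diam_at N v t" if "j < N" "l < N" for j l
            using that by (rule diam_ge)
          show "norm (v (fst p) t - v (snd p) t) = diam_at N v t" by (rule nd)
          show "0 \<le> g t" by (rule g0[OF t0'])
          show "g t \<le> cs_alpha tt t * \<psi> (norm (x (fst p) t - x j t))" if "j < N" for j
            using pf(1)[OF t0' ij(1) that] by (simp add: alpha g_def)
          show "g t \<le> cs_alpha tt t * \<psi> (norm (x (snd p) t - x j t))" if "j < N" for j
            using pf(1)[OF t0' ij(2) that] by (simp add: alpha g_def)
        qed
        then show ?thesis by (simp add: q'_def D2_def)
      qed
      show "0 \<le> g t" by (rule g0[OF t0'])
      show "eventually (\<lambda>h. G (t + h) \<le> G t + h * g t) (at_right 0)" by (rule Gb)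
      show "0 \<le> D2 s" for s by (simp add: D2_def)
      show "e > 0" by (rule e)
    qed
    then show ?thesis by (simp add: F_def)
  qed
  have "F b \<le> F a" by (rule dini_mono[OF ab Fcont FD])
  define I where "I = G b"
  have Fb: "F b = (diam_at N v b)^2 * exp (2 * I)" by (simp add: F_def D2_def I_def)
  have Fa: "F a = (diam_at N v a)^2" by (simp add: F_def D2_def G_def)
  have I0: "0 \<le> I" unfolding I_def G_def
    by (rule integral_nonneg[OF gint]) (use a0 g0 in auto)
  have IKT: "I \<le> K * T"
  proof -
    have "I \<le> integral {a..b} (\<lambda>_. K)" unfolding I_def G_def
      by (rule integral_le[OF gint]) (use a0 gK in auto)
    also have "\<dots> = (b - a) * K" using ab by simp
    also have "\<dots> \<le> T * K"
    proof (rule mult_right_mono)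
      show "b - a \<le> T" using T_bd[of n] by (simp add: a_def b_def)
      show "0 \<le> K" using psiK[of 0] psi_pos[of 0] by simp
    qed
    finally show ?thesis by (simp add: mult.commute)
  qed
  have db: "diam_at N v b \<le> exp (- I) * diam_at N v a"
  proof (rule power2_le_imp_le)
    have "(diam_at N v b)^2 * exp (2 * I) \<le> (diam_at N v a)^2" using \<open>F b \<le> F a\<close> Fb Fa by simp
    then have "(diam_at N v b)^2 \<le> (diam_at N v a)^2 * exp (- (2 * I))"
      by (simp add: exp_minus field_simps)
    also have "\<dots> = (exp (- I) * diam_at N v a)^2"
      by (simp add: power_mult_distrib mult.commute flip: exp_of_nat_mult)
    finally show "(diam_at N v b)^2 \<le> (exp (- I) * diam_at N v a)^2" .
    show "0 \<le> exp (- I) * diam_at N v a" using diam_nonneg[OF N0, of v a] by simp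
  qed
  have ch: "exp (- I) \<le> 1 - c * I" unfolding c_def
    using exp_chord[OF I0 IKT] by (simp add: mult.commute)
  have Iphi: "integral {a..b} (\<lambda>s. min (c * g s) (c / T)) \<le> c * I"
  proof -
    have "integral {a..b} (\<lambda>s. min (c * g s) (c / T)) \<le> integral {a..b} (\<lambda>s. c * g s)"
      by (rule integral_le[OF phiint]) (use gint c0 in auto)
    also have "\<dots> = c * I" by (simp add: I_def G_def)
    finally show ?thesis .
  qed
  have "diam_at N v b \<le> (1 - c * I) * diam_at N v a"
    using db ch diam_nonneg[OF N0, of v a] by (meson mult_right_mono order_trans)
  also have "\<dots> \<le> (1 - integral {a..b} (\<lambda>s. min (c * g s) (c / T))) * diam_at N v a"
    using Iphi diam_nonneg[OF N0, of v a] by (intro mult_right_mono) auto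
  finally show ?thesis by (simp add: phi_eq a_def b_def)
qed

end
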